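(* Work in Cramér's random model: let $\mathcal{P}$ be a random subset of the integers $\ge 3$ in which each integer $m \ge 3$ is included independently with probability $1/\ln m$, and let $q_1 < q_2 < \cdots$ be the elements of $\mathcal{P}$ listed in increasing order. For $n,k \ge 1$ put $T_k(n) = q_n + q_{n+1} + \cdots + q_{n+k-1}$. Then, with probability $1$, for every $n \ge 1$ there exists an odd integer $k \ge 3$ such that $T_k(n) \in \mathcal{P}$. Equivalently, the probability that there exists $n$ such that $T_k(n) \notin \mathcal{P}$ for all odd $k \ge 3$ is zero.
   Context: Cramér's probabilistic model of the primes replaces the set of primes by a random set in which each integer $m\ge 3$ is declared "prime" independently with probability $1/\ln m$, where $\ln$ is the natural logarithm. The sums $T_k(n)$ are the model analogue of sums of $k$ consecutive primes starting at the $n$-th prime. *)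

theory Defs
  imports "HOL-Probability.Probability" "HOL-Library.Infinite_Set"
begin

definition cramer_set :: "(nat \<Rightarrow> 'a \<Rightarrow> bool) \<Rightarrow> 'a \<Rightarrow> nat set" where
  "cramer_set X \<omega> = {m. 3 \<le> m \<and> X m \<omega>}"

text \<open>q_n, the n-th element (1-indexed) of the set in increasing order.\<close>
definition cramer_q :: "nat set \<Rightarrow> nat \<Rightarrow> nat" where
  "cramer_q P n = enumerate P (n - 1)"

definition cramer_T :: "nat set \<Rightarrow> nat \<Rightarrow> nat \<Rightarrow> nat" where
  "cramer_T P k n = (\<Sum>i<k. cramer_q P (n + i))"

end

theory Submission
  imports Defs "HOL-Probability.Probability"
begin

lemma enum_seg0:
  fixes S :: "nat set"
  assumes "0 < card (S \<inter> {..<s})"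
  shows "enumerate S 0 = enumerate (S \<inter> {..<s}) 0"
proof -
  have ne: "\<exists>t. t \<in> S \<and> t < s"
    by (metis assms card_gt_0_iff disjoint_iff_not_equal lessThan_iff)
  have "(LEAST n. n \<in> S \<and> n < s) = (LEAST n. n \<in> S)"
  proof (rule Least_equality)
    show "(LEAST n. n \<in> S) \<in> S \<and> (LEAST n. n \<in> S) < s"
      using ne by (meson LeastI Least_le le_less_trans)
  qed (simp add: Least_le)
  then show ?thesis by (simp add: enumerate_0)
qed

lemma enum_seg:
  fixes S :: "nat set"
  assumes "n < card (S \<inter> {..<s})"
  shows "enumerate S n = enumerate (S \<inter> {..<s}) n"
  using assms
proof (induction n arbitrary: S)
  case 0
  have ne: "\<exists>t. t \<in> S \<and> t < s"
    by (metis "0" card_gt_0_iff disjoint_iff_not_equal lessThan_iff)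
  have "(LEAST n. n \<in> S \<and> n < s) = (LEAST n. n \<in> S)"
  proof (rule Least_equality)
    show "(LEAST n. n \<in> S) \<in> S \<and> (LEAST n. n \<in> S) < s"
      using ne by (meson LeastI Least_le le_less_trans)
  qed (simp add: Least_le)
  then show ?case by (simp add: enumerate_0)
next
  case (Suc n)
  define L where "L = enumerate S 0"
  have L2: "L = enumerate (S \<inter> {..<s}) 0"
    using enum_seg0[of S s] Suc.prems unfolding L_def by simp
  have fin: "finite (S \<inter> {..<s})" by simp
  have Lin: "L \<in> S \<inter> {..<s}"
    using L2 Suc.prems fin finite_enumerate_in_set[OF fin, of 0] by simp
  have eq: "(S \<inter> {..<s}) - {L} = (S - {L}) \<inter> {..<s}" by auto
  have "n < card ((S - {L}) \<inter> {..<s})"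
    using Suc.prems Lin fin by (simp flip: eq)
  then have "enumerate (S - {L}) n = enumerate ((S - {L}) \<inter> {..<s}) n"
    using Suc.IH by blast
  then show ?case
    by (simp add: enumerate_Suc' L_def[symmetric] flip: L2 eq)
qed

lemma enum_props:
  fixes P :: "nat set"
  assumes "N \<le> card (P \<inter> {..<x})" "i < N"
  shows "enumerate P i \<in> P" "enumerate P i < x"
proof -
  have i: "i < card (P \<inter> {..<x})" using assms by simp
  have "enumerate P i = enumerate (P \<inter> {..<x}) i" using enum_seg[OF i] .
  moreover have "enumerate (P \<inter> {..<x}) i \<in> P \<inter> {..<x}"
    by (rule finite_enumerate_in_set[OF _ i]) simp
  ultimately show "enumerate P i \<in> P" "enumerate P i < x" by auto
qed

lemma enum_mono:
  fixes P :: "nat set"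
  assumes "N \<le> card (P \<inter> {..<x})" "i < j" "j < N"
  shows "enumerate P i < enumerate P j"
proof -
  have j: "j < card (P \<inter> {..<x})" using assms by simp
  have i: "i < card (P \<inter> {..<x})" using assms by simp
  have "enumerate (P \<inter> {..<x}) i < enumerate (P \<inter> {..<x}) j"
    by (rule finite_enumerate_mono[OF assms(2) _ j]) simp
  then show ?thesis using enum_seg[OF i] enum_seg[OF j] by simp
qed

lemma card_from_mono:
  fixes f :: "nat \<Rightarrow> nat"
  assumes "\<And>i j. i < j \<Longrightarrow> j < N \<Longrightarrow> f i < f j" "f ` {..<N} \<subseteq> A" "finite A"
  shows "N \<le> card A"
proof -
  have "inj_on f {..<N}"
  proof (rule inj_onI)
    fix i j assume "i \<in> {..<N}" "j \<in> {..<N}" "f i = f j"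
    then show "i = j" using assms(1)[of i j] assms(1)[of j i]
      by (cases i j rule: linorder_cases) auto
  qed
  then have "card (f ` {..<N}) = N" by (simp add: card_image)
  then show ?thesis using card_mono[OF assms(3) assms(2)] by simp
qed

lemma okc_agree:
  fixes P P' :: "nat set"
  assumes "N \<le> card (P \<inter> {..<x})" "P \<inter> {..<t} = P' \<inter> {..<t}" "\<And>i. i < N \<Longrightarrow> enumerate P i < t"
  shows "N \<le> card (P' \<inter> {..<t})" "\<And>i. i < N \<Longrightarrow> enumerate P' i = enumerate P i"
proof -
  have c: "N \<le> card (P \<inter> {..<t})"
  proof (rule card_from_mono[where f="enumerate P"])
    show "\<And>i j. i < j \<Longrightarrow> j < N \<Longrightarrow> enumerate P i < enumerate P j"
      using enum_mono[OF assms(1)] by blast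
    show "enumerate P ` {..<N} \<subseteq> P \<inter> {..<t}"
      using enum_props[OF assms(1)] assms(3) by auto
  qed simp
  then show "N \<le> card (P' \<inter> {..<t})" using assms(2) by simp
  fix i assume i: "i < N"
  then have i1: "i < card (P \<inter> {..<t})" using c by simp
  then have i2: "i < card (P' \<inter> {..<t})" using assms(2) by simp
  show "enumerate P' i = enumerate P i"
    using enum_seg[OF i1] enum_seg[OF i2] assms(2) by simp
qed

definition okc :: "nat \<Rightarrow> nat set \<Rightarrow> bool" where
  "okc N P = (\<exists>x. N \<le> card (P \<inter> {..<x}))"

definition Psi :: "nat \<Rightarrow> nat \<Rightarrow> nat \<Rightarrow> nat set \<Rightarrow> bool" where
  "Psi n K k P = (okc (n+k-1) P \<and> (\<forall>j. odd j \<and> 3 \<le> j \<and> j \<le> k \<longrightarrow> cramer_T P j n \<notin> P)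
      \<and> (\<forall>j. odd j \<and> K \<le> j \<and> j \<le> k \<longrightarrow> cramer_T P j n \<le> j^8))"

definition Phi :: "nat \<Rightarrow> nat \<Rightarrow> nat \<Rightarrow> nat \<Rightarrow> nat set \<Rightarrow> bool" where
  "Phi n K k t P = (okc (n+k-1) P \<and> (\<forall>j. odd j \<and> 3 \<le> j \<and> j < k \<longrightarrow> cramer_T P j n \<notin> P)
      \<and> (\<forall>j. odd j \<and> K \<le> j \<and> j < k \<longrightarrow> cramer_T P j n \<le> j^8) \<and> cramer_T P k n = t)"

lemma T_split:
  assumes "j \<le> k"
  shows "cramer_T P k n = cramer_T P j n + (\<Sum>i\<in>{j..<k}. cramer_q P (n+i))"
proof -
  have "(\<Sum>i\<in>{0..<j}. cramer_q P (n+i)) + (\<Sum>i\<in>{j..<k}. cramer_q P (n+i)) = (\<Sum>i\<in>{0..<k}. cramer_q P (n+i))"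
    by (rule sum.atLeastLessThan_concat) (use assms in auto)
  then show ?thesis unfolding cramer_T_def by (simp add: atLeast0LessThan)
qed

lemma q_eq: "1 \<le> n \<Longrightarrow> cramer_q P (n+i) = enumerate P (n - 1 + i)"
  unfolding cramer_q_def by (simp add: algebra_simps)

lemma q_props:
  assumes "1 \<le> n" "n + k - 1 \<le> card (P \<inter> {..<x})" "i < k" "P \<subseteq> {3..}"
  shows "cramer_q P (n+i) \<in> P" "3 \<le> cramer_q P (n+i)"
proof -
  have "n - 1 + i < n + k - 1" using assms by simp
  then have "enumerate P (n - 1 + i) \<in> P" using enum_props(1)[OF assms(2)] by blast
  then show "cramer_q P (n+i) \<in> P" "3 \<le> cramer_q P (n+i)" using q_eq[OF assms(1)] assms(4) by auto
qed

lemma T_lower: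
  assumes "1 \<le> n" "n + k - 1 \<le> card (P \<inter> {..<x})" "j < k" "P \<subseteq> {3..}"
  shows "cramer_T P j n < cramer_T P k n"
proof -
  have "cramer_T P k n = cramer_T P j n + (\<Sum>i\<in>{j..<k}. cramer_q P (n+i))"
    using T_split assms by simp
  moreover have "(\<Sum>i\<in>{j..<k}. cramer_q P (n+i)) \<ge> cramer_q P (n+j)"
    by (rule member_le_sum) (use assms in auto)
  moreover have "3 \<le> cramer_q P (n+j)" using q_props(2)[OF assms(1,2,3,4)] .
  ultimately show ?thesis by simp
qed

lemma T_ge3:
  assumes "1 \<le> n" "n + k - 1 \<le> card (P \<inter> {..<x})" "1 \<le> k" "P \<subseteq> {3..}"
  shows "3 \<le> cramer_T P k n"
proof -
  have "cramer_T P k n = cramer_T P 0 n + (\<Sum>i\<in>{0..<k}. cramer_q P (n+i))"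
    using T_split[of 0 k] by simp
  moreover have "(\<Sum>i\<in>{0..<k}. cramer_q P (n+i)) \<ge> cramer_q P (n+0)"
    by (rule member_le_sum) (use assms in auto)
  moreover have "3 \<le> cramer_q P (n+0)" using q_props(2)[OF assms(1,2) _ assms(4), of 0] assms(3) by simp
  ultimately show ?thesis by simp
qed

lemma Phi_det:
  assumes n: "1 \<le> n" and k: "2 \<le> k" and P: "P \<subseteq> {3..}" and P': "P' \<subseteq> {3..}"
    and agr: "P \<inter> {..<t} = P' \<inter> {..<t}" and ph: "Phi n K k t P"
  shows "Phi n K k t P'"
proof -
  from ph obtain x where x: "n + k - 1 \<le> card (P \<inter> {..<x})"
    unfolding Phi_def okc_def by blast
  have Tk: "cramer_T P k n = t" using ph unfolding Phi_def by blast
  have last: "enumerate P (n + k - 2) < t"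
  proof -
    have "cramer_T P (k-1) n < t" using T_lower[OF n x _ P, of "k-1"] k Tk by simp
    have "cramer_T P k n = cramer_T P (k-1) n + (\<Sum>i\<in>{k-1..<k}. cramer_q P (n+i))"
      using T_split[of "k-1" k] by simp
    also have "(\<Sum>i\<in>{k-1..<k}. cramer_q P (n+i)) = cramer_q P (n + (k-1))"
    proof -
      have "{k-1..<k} = {k-1}" using k by auto
      then show ?thesis by simp
    qed
    also have "cramer_q P (n + (k-1)) = enumerate P (n + k - 2)"
      using q_eq[OF n, of P "k-1"] k n by (simp add: algebra_simps numeral_2_eq_2)
    finally have "cramer_T P k n = cramer_T P (k-1) n + enumerate P (n + k - 2)" .
    moreover have "3 \<le> cramer_T P (k-1) n" using T_ge3[OF n _ _ P, of "k-1" x] x k by simp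
    ultimately show ?thesis using Tk by simp
  qed
  have all: "enumerate P i < t" if "i < n + k - 1" for i
  proof (cases "i = n + k - 2")
    case True then show ?thesis using last by simp
  next
    case False
    then have "enumerate P i < enumerate P (n + k - 2)"
      using enum_mono[OF x, of i "n+k-2"] that k n by simp
    then show ?thesis using last by simp
  qed
  note ag = okc_agree[OF x agr all]
  have okc': "okc (n+k-1) P'" unfolding okc_def using ag(1) by blast
  have Teq: "cramer_T P' j n = cramer_T P j n" if "j \<le> k" for j
    unfolding cramer_T_def
  proof (rule sum.cong[OF refl])
    fix i assume "i \<in> {..<j}"
    then have "n - 1 + i < n + k - 1" using that n k by auto
    then show "cramer_q P' (n + i) = cramer_q P (n + i)"
      using q_eq[OF n] ag(2) by simp
  qed
  have Tlt: "cramer_T P j n < t" if "j < k" for j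
    using T_lower[OF n x that P] Tk by simp
  have mem: "cramer_T P j n \<in> P \<longleftrightarrow> cramer_T P j n \<in> P'" if "j < k" for j
  proof -
    have "cramer_T P j n \<in> P \<longleftrightarrow> cramer_T P j n \<in> P \<inter> {..<t}" using Tlt[OF that] by simp
    also have "\<dots> \<longleftrightarrow> cramer_T P j n \<in> P' \<inter> {..<t}" using agr by simp
    also have "\<dots> \<longleftrightarrow> cramer_T P j n \<in> P'" using Tlt[OF that] by simp
    finally show ?thesis .
  qed
  show ?thesis
    unfolding Phi_def
  proof (intro conjI allI impI)
    show "okc (n + k - 1) P'" by (rule okc')
    fix j assume j: "odd j \<and> 3 \<le> j \<and> j < k"
    then have "cramer_T P j n \<notin> P" using ph unfolding Phi_def by blast
    then show "cramer_T P' j n \<notin> P'" using mem[of j] Teq[of j] j by simp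
  next
    fix j assume j: "odd j \<and> K \<le> j \<and> j < k"
    then have "cramer_T P j n \<le> j^8" using ph unfolding Phi_def by blast
    then show "cramer_T P' j n \<le> j^8" using Teq[of j] j by simp
  next
    show "cramer_T P' k n = t" using Teq[of k] Tk by simp
  qed
qed

lemma Psi_iff:
  assumes n: "1 \<le> n" and k: "3 \<le> k" "odd k" "K \<le> k" and P: "P \<subseteq> {3..}"
  shows "Psi n K k P \<longleftrightarrow> (\<exists>t\<in>{3..k^8}. Phi n K k t P \<and> t \<notin> P)"
proof
  assume ps: "Psi n K k P"
  from ps obtain x where x: "n + k - 1 \<le> card (P \<inter> {..<x})"
    unfolding Psi_def okc_def by blast
  let ?t = "cramer_T P k n"
  have "3 \<le> ?t" using T_ge3[OF n x _ P] k by simp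
  moreover have "?t \<le> k^8" using ps k unfolding Psi_def by blast
  moreover have "?t \<notin> P" using ps k unfolding Psi_def by blast
  moreover have "Phi n K k ?t P" using ps unfolding Psi_def Phi_def by auto
  ultimately show "\<exists>t\<in>{3..k^8}. Phi n K k t P \<and> t \<notin> P" by auto
next
  assume "\<exists>t\<in>{3..k^8}. Phi n K k t P \<and> t \<notin> P"
  then obtain t where t: "t \<in> {3..k^8}" "Phi n K k t P" "t \<notin> P" by blast
  show "Psi n K k P"
    unfolding Psi_def
  proof (intro conjI allI impI)
    show "okc (n + k - 1) P" using t unfolding Phi_def by blast
    fix j assume j: "odd j \<and> 3 \<le> j \<and> j \<le> k"
    show "cramer_T P j n \<notin> P"
    proof (cases "j = k")
      case True then show ?thesis using t unfolding Phi_def by auto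
    next
      case False then show ?thesis using t j unfolding Phi_def by auto
    qed
  next
    fix j assume j: "odd j \<and> K \<le> j \<and> j \<le> k"
    show "cramer_T P j n \<le> j^8"
    proof (cases "j = k")
      case True then show ?thesis using t unfolding Phi_def by auto
    next
      case False then show ?thesis using t j unfolding Phi_def by auto
    qed
  qed
qed

lemma Phi_Psi:
  assumes "odd k" "5 \<le> k" "Phi n K k t P"
  shows "Psi n K (k-2) P"
  unfolding Psi_def
proof (intro conjI allI impI)
  from assms obtain x where x: "n + k - 1 \<le> card (P \<inter> {..<x})"
    unfolding Phi_def okc_def by blast
  then show "okc (n + (k - 2) - 1) P" unfolding okc_def
    by (intro exI[of _ x]) simp
  fix j assume j: "odd j \<and> 3 \<le> j \<and> j \<le> k - 2"
  then have "j < k" using assms(2) by arith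
  then show "cramer_T P j n \<notin> P" using assms j unfolding Phi_def by blast
next
  fix j assume j: "odd j \<and> K \<le> j \<and> j \<le> k - 2"
  then have "j < k" using assms(2) by arith
  then show "cramer_T P j n \<le> j^8" using assms j unfolding Phi_def by blast
qed

locale cramer = prob_space M for M :: "'a measure" +
  fixes X :: "nat \<Rightarrow> 'a \<Rightarrow> bool"
  assumes ind: "indep_vars (\<lambda>_. count_space UNIV) X {3..}"
    and pr: "\<And>m. 3 \<le> m \<Longrightarrow> prob {\<omega> \<in> space M. X m \<omega>} = 1 / ln (real m)"
begin

lemma rv: "3 \<le> m \<Longrightarrow> X m \<in> measurable M (count_space UNIV)"
  using ind unfolding indep_vars_def2 by simp

lemma ev1: "3 \<le> m \<Longrightarrow> {\<omega> \<in> space M. X m \<omega> = b} \<in> events"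
proof -
  assume "3 \<le> m"
  then have "X m -` {b} \<inter> space M \<in> events"
    using measurable_sets[OF rv[OF \<open>3 \<le> m\<close>], of "{b}"] by simp
  moreover have "X m -` {b} \<inter> space M = {\<omega> \<in> space M. X m \<omega> = b}" by auto
  ultimately show ?thesis by simp
qed

lemma evJ:
  assumes "finite J" "J \<subseteq> {3..}"
  shows "{\<omega> \<in> space M. \<forall>m\<in>J. X m \<omega> = g m} \<in> events"
proof (cases "J = {}")
  case True then show ?thesis by simp
next
  case False
  have "{\<omega> \<in> space M. \<forall>m\<in>J. X m \<omega> = g m} = (\<Inter>m\<in>J. {\<omega> \<in> space M. X m \<omega> = g m})"
    using False by auto
  also have "\<dots> \<in> events"
  proof (rule sets.finite_INT)
    show "finite J" "J \<noteq> {}" by fact+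
    fix m assume "m \<in> J"
    then have "3 \<le> m" using assms by auto
    then show "{\<omega> \<in> space M. X m \<omega> = g m} \<in> events" by (rule ev1)
  qed
  finally show ?thesis .
qed

lemma probJ:
  assumes "finite J" "J \<subseteq> {3..}"
  shows "prob {\<omega> \<in> space M. \<forall>m\<in>J. X m \<omega> = g m} = (\<Prod>m\<in>J. prob {\<omega> \<in> space M. X m \<omega> = g m})"
proof (cases "J = {}")
  case True then show ?thesis by (simp add: prob_space)
next
  case False
  have indep: "indep_sets (\<lambda>i. {X i -` A \<inter> space M |A. A \<in> sets (count_space UNIV)}) {3..}"
    using ind unfolding indep_vars_def2 by blast
  have "{\<omega> \<in> space M. \<forall>m\<in>J. X m \<omega> = g m} = (\<Inter>m\<in>J. X m -` {g m} \<inter> space M)"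
    using False by auto
  also have "prob \<dots> = (\<Prod>m\<in>J. prob (X m -` {g m} \<inter> space M))"
  proof -
    have "\<forall>j\<in>J. X j -` {g j} \<inter> space M \<in> {X j -` A \<inter> space M |A. A \<in> sets (count_space UNIV)}"
    proof
      fix j show "X j -` {g j} \<inter> space M \<in> {X j -` A \<inter> space M |A. A \<in> sets (count_space UNIV)}"
        by (rule CollectI, rule exI[of _ "{g j}"]) simp
    qed
    from indep_setsD[OF indep assms(2) False assms(1) this] show ?thesis .
  qed
  also have "\<dots> = (\<Prod>m\<in>J. prob {\<omega> \<in> space M. X m \<omega> = g m})"
  proof (rule prod.cong[OF refl])
    fix m show "prob (X m -` {g m} \<inter> space M) = prob {\<omega> \<in> space M. X m \<omega> = g m}"
      by (rule arg_cong[where f=prob]) blast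
  qed
  finally show ?thesis .
qed

lemma prob_not: "3 \<le> t \<Longrightarrow> prob {\<omega> \<in> space M. X t \<omega> = False} = 1 - 1 / ln (real t)"
proof -
  assume t: "3 \<le> t"
  have "{\<omega> \<in> space M. X t \<omega> = False} = space M - {\<omega> \<in> space M. X t \<omega> = True}" by auto
  then show ?thesis using prob_compl[OF ev1[OF t, of True]] pr[OF t] by simp
qed

definition rX :: "nat \<Rightarrow> 'a \<Rightarrow> nat \<Rightarrow> bool" where
  "rX t \<omega> = restrict (\<lambda>m. X m \<omega>) {3..<t}"

lemma rX_eq: "f \<in> PiE {3..<t} (\<lambda>_. UNIV) \<Longrightarrow> (rX t \<omega> = f) \<longleftrightarrow> (\<forall>m\<in>{3..<t}. X m \<omega> = f m)"
  by (auto simp: rX_def PiE_iff extensional_def fun_eq_iff)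

lemma rX_PiE: "rX t \<omega> \<in> PiE {3..<t} (\<lambda>_. UNIV)"
  by (simp add: rX_def)

lemma rX_UN: "{\<omega> \<in> space M. rX t \<omega> \<in> S} = (\<Union>f\<in>S \<inter> PiE {3..<t} (\<lambda>_. UNIV). {\<omega> \<in> space M. \<forall>m\<in>{3..<t}. X m \<omega> = f m})"
proof (intro set_eqI iffI)
  fix \<omega> assume "\<omega> \<in> {\<omega> \<in> space M. rX t \<omega> \<in> S}"
  then show "\<omega> \<in> (\<Union>f\<in>S \<inter> PiE {3..<t} (\<lambda>_. UNIV). {\<omega> \<in> space M. \<forall>m\<in>{3..<t}. X m \<omega> = f m})"
    using rX_PiE[of t \<omega>] rX_eq[of "rX t \<omega>" t \<omega>] by auto
next
  fix \<omega> assume "\<omega> \<in> (\<Union>f\<in>S \<inter> PiE {3..<t} (\<lambda>_. UNIV). {\<omega> \<in> space M. \<forall>m\<in>{3..<t}. X m \<omega> = f m})"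
  then obtain f where f: "f \<in> S" "f \<in> PiE {3..<t} (\<lambda>_. UNIV)" "\<omega> \<in> space M" "\<forall>m\<in>{3..<t}. X m \<omega> = f m" by blast
  then have "rX t \<omega> = f" using rX_eq by blast
  then show "\<omega> \<in> {\<omega> \<in> space M. rX t \<omega> \<in> S}" using f by simp
qed

lemma rX_ev: "{\<omega> \<in> space M. rX t \<omega> \<in> S} \<in> events"
proof -
  let ?S = "S \<inter> PiE {3..<t} (\<lambda>_. UNIV)"
  have fin: "finite ?S" by (intro finite_Int disjI2 finite_PiE) auto
  have "{\<omega> \<in> space M. rX t \<omega> \<in> S} = (\<Union>f\<in>?S. {\<omega> \<in> space M. \<forall>m\<in>{3..<t}. X m \<omega> = f m})"
    by (rule rX_UN)
  also have "\<dots> \<in> events"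
    using fin by (intro sets.finite_UN evJ) auto
  finally show ?thesis .
qed

lemma rX_indep:
  assumes t: "3 \<le> t"
  shows "prob {\<omega> \<in> space M. rX t \<omega> \<in> S \<and> X t \<omega> = False} = prob {\<omega> \<in> space M. rX t \<omega> \<in> S} * (1 - 1 / ln (real t))"
proof -
  let ?S = "S \<inter> PiE {3..<t} (\<lambda>_. UNIV)"
  have fin: "finite ?S" by (intro finite_Int disjI2 finite_PiE) auto
  define A where "A f = {\<omega> \<in> space M. \<forall>m\<in>{3..<t}. X m \<omega> = f m}" for f
  define B where "B f = {\<omega> \<in> space M. \<forall>m\<in>{3..t}. X m \<omega> = (f(t := False)) m}" for f
  have dif: "\<exists>m\<in>{3..<t}. f m \<noteq> g m" if "f\<in>?S" "g\<in>?S" "f\<noteq>g" for f g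
  proof (rule ccontr)
    assume "\<not> (\<exists>m\<in>{3..<t}. f m \<noteq> g m)"
    then have "f = g" using that by (intro PiE_ext[of f "{3..<t}" "\<lambda>_. UNIV" g]) auto
    then show False using that by simp
  qed
  have disA: "disjoint_family_on A ?S"
    unfolding disjoint_family_on_def A_def
  proof (intro ballI impI)
    fix f g assume "f\<in>?S" "g\<in>?S" "f\<noteq>g"
    then obtain m where "m\<in>{3..<t}" "f m \<noteq> g m" using dif by blast
    then show "{\<omega> \<in> space M. \<forall>m\<in>{3..<t}. X m \<omega> = f m} \<inter> {\<omega> \<in> space M. \<forall>m\<in>{3..<t}. X m \<omega> = g m} = {}"
      by auto
  qed
  have disB: "disjoint_family_on B ?S"
    unfolding disjoint_family_on_def B_def
  proof (intro ballI impI)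
    fix f g assume "f\<in>?S" "g\<in>?S" "f\<noteq>g"
    then obtain m where m: "m\<in>{3..<t}" "f m \<noteq> g m" using dif by blast
    then have "m \<in> {3..t}" "m \<noteq> t" by auto
    then show "{\<omega> \<in> space M. \<forall>m\<in>{3..t}. X m \<omega> = (f(t:=False)) m} \<inter> {\<omega> \<in> space M. \<forall>m\<in>{3..t}. X m \<omega> = (g(t:=False)) m} = {}"
      using m(2) by auto
  qed
  have e1: "{\<omega> \<in> space M. rX t \<omega> \<in> S} = (\<Union>f\<in>?S. A f)"
    unfolding A_def by (rule rX_UN)
  have e2: "{\<omega> \<in> space M. rX t \<omega> \<in> S \<and> X t \<omega> = False} = (\<Union>f\<in>?S. B f)"
  proof -
    have "rX t \<omega> \<in> S \<and> X t \<omega> = False \<longleftrightarrow> (\<exists>f\<in>?S. \<forall>m\<in>{3..t}. X m \<omega> = (f(t := False)) m)" for \<omega>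
    proof
      assume "rX t \<omega> \<in> S \<and> X t \<omega> = False"
      then show "\<exists>f\<in>?S. \<forall>m\<in>{3..t}. X m \<omega> = (f(t := False)) m"
        by (intro bexI[of _ "rX t \<omega>"]) (auto simp: rX_PiE rX_def)
    next
      assume "\<exists>f\<in>?S. \<forall>m\<in>{3..t}. X m \<omega> = (f(t := False)) m"
      then obtain f where f: "f \<in> ?S" "\<forall>m\<in>{3..t}. X m \<omega> = (f(t := False)) m" by blast
      then have "rX t \<omega> = f" using rX_eq[of f t \<omega>] by (simp add: Ball_def)
      then show "rX t \<omega> \<in> S \<and> X t \<omega> = False" using f t by auto
    qed
    then show ?thesis unfolding B_def by (intro set_eqI) (simp only: mem_Collect_eq UN_iff, blast)
  qed
  have pB: "prob (B f) = prob (A f) * (1 - 1 / ln (real t))" for f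
  proof -
    have ins: "{3..t} = insert t {3..<t}" using t by auto
    have "prob (B f) = (\<Prod>m\<in>{3..t}. prob {\<omega> \<in> space M. X m \<omega> = (f(t := False)) m})"
      unfolding B_def by (rule probJ) auto
    then have "prob (B f) = (\<Prod>m\<in>insert t {3..<t}. prob {\<omega> \<in> space M. X m \<omega> = (f(t := False)) m})"
      by (simp only: ins)
    also have "\<dots> = prob {\<omega> \<in> space M. X t \<omega> = False} * (\<Prod>m\<in>{3..<t}. prob {\<omega> \<in> space M. X m \<omega> = f m})"
      by (subst prod.insert) (auto intro!: prod.cong)
    also have "(\<Prod>m\<in>{3..<t}. prob {\<omega> \<in> space M. X m \<omega> = f m}) = prob (A f)"
      unfolding A_def by (rule probJ[symmetric]) auto
    finally show ?thesis using prob_not[OF t] by simp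
  qed
  have sA: "(\<Sum>f\<in>?S. prob (A f)) = prob {\<omega> \<in> space M. rX t \<omega> \<in> S}"
  proof -
    have "A ` ?S \<subseteq> events"
    proof (rule image_subsetI)
      fix f show "A f \<in> events" unfolding A_def by (rule evJ) auto
    qed
    then show ?thesis unfolding e1 by (rule finite_measure_finite_Union[OF fin _ disA, symmetric])
  qed
  have c1: "prob {\<omega> \<in> space M. rX t \<omega> \<in> S \<and> X t \<omega> = False} = (\<Sum>f\<in>?S. prob (B f))"
  proof -
    have "B ` ?S \<subseteq> events"
    proof (rule image_subsetI)
      fix f show "B f \<in> events" unfolding B_def by (rule evJ) auto
    qed
    then show ?thesis unfolding e2 by (rule finite_measure_finite_Union[OF fin _ disB])
  qed
  have c2: "(\<Sum>f\<in>?S. prob (B f)) = (\<Sum>f\<in>?S. prob (A f)) * (1 - 1 / ln (real t))"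
    by (simp add: pB sum_distrib_right)
  show ?thesis by (simp only: c1 c2 sA)
qed

end

lemma ln_ge1: "3 \<le> x \<Longrightarrow> 1 \<le> ln (x::real)"
proof -
  assume x: "3 \<le> x"
  have "exp 1 \<le> x" using exp_le x by linarith
  then have "ln (exp 1) \<le> ln x" using x by (subst ln_le_cancel_iff) auto
  then show ?thesis by simp
qed

context cramer
begin

lemma cs_rX: "{m. 3 \<le> m \<and> m < t \<and> rX t \<omega> m} = cramer_set X \<omega> \<inter> {..<t}"
  by (auto simp: rX_def cramer_set_def)

lemma win:
  assumes t: "3 \<le> t"
    and det: "\<And>P P'. P \<subseteq> {3..} \<Longrightarrow> P' \<subseteq> {3..} \<Longrightarrow> P \<inter> {..<t} = P' \<inter> {..<t} \<Longrightarrow> \<Phi> P \<Longrightarrow> \<Phi> P'"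
  shows "{\<omega> \<in> space M. \<Phi> (cramer_set X \<omega>)} \<in> events"
    and "prob {\<omega> \<in> space M. \<Phi> (cramer_set X \<omega>) \<and> X t \<omega> = False}
         = prob {\<omega> \<in> space M. \<Phi> (cramer_set X \<omega>)} * (1 - 1 / ln (real t))"
proof -
  define S where "S = {f. \<Phi> {m. 3 \<le> m \<and> m < t \<and> f m}}"
  have key: "\<Phi> (cramer_set X \<omega>) \<longleftrightarrow> rX t \<omega> \<in> S" for \<omega>
  proof -
    have a: "cramer_set X \<omega> \<inter> {..<t} \<subseteq> {3..}" "cramer_set X \<omega> \<subseteq> {3..}"
      by (auto simp: cramer_set_def)
    have b: "(cramer_set X \<omega> \<inter> {..<t}) \<inter> {..<t} = cramer_set X \<omega> \<inter> {..<t}" by auto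
    have "\<Phi> (cramer_set X \<omega>) \<longleftrightarrow> \<Phi> (cramer_set X \<omega> \<inter> {..<t})"
      using det[OF a(2) a(1)] det[OF a(1) a(2)] b by metis
    then show ?thesis unfolding S_def using cs_rX by simp
  qed
  have e1: "{\<omega> \<in> space M. \<Phi> (cramer_set X \<omega>)} = {\<omega> \<in> space M. rX t \<omega> \<in> S}"
    using key by blast
  have e2: "{\<omega> \<in> space M. \<Phi> (cramer_set X \<omega>) \<and> X t \<omega> = False} = {\<omega> \<in> space M. rX t \<omega> \<in> S \<and> X t \<omega> = False}"
    using key by blast
  show "{\<omega> \<in> space M. \<Phi> (cramer_set X \<omega>)} \<in> events" unfolding e1 by (rule rX_ev)
  show "prob {\<omega> \<in> space M. \<Phi> (cramer_set X \<omega>) \<and> X t \<omega> = False}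
         = prob {\<omega> \<in> space M. \<Phi> (cramer_set X \<omega>)} * (1 - 1 / ln (real t))"
    unfolding e1 e2 by (rule rX_indep[OF t])
qed

definition AA :: "nat \<Rightarrow> nat \<Rightarrow> nat \<Rightarrow> 'a set" where
  "AA n K k = {\<omega> \<in> space M. Psi n K k (cramer_set X \<omega>)}"

definition BB :: "nat \<Rightarrow> nat \<Rightarrow> nat \<Rightarrow> nat \<Rightarrow> 'a set" where
  "BB n K k t = {\<omega> \<in> space M. Phi n K k t (cramer_set X \<omega>)}"

lemma BB_props:
  assumes "1 \<le> n" "2 \<le> k" "3 \<le> t"
  shows "BB n K k t \<in> events"
    and "prob {\<omega> \<in> space M. Phi n K k t (cramer_set X \<omega>) \<and> X t \<omega> = False} = prob (BB n K k t) * (1 - 1 / ln (real t))"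
proof -
  have det: "\<And>P P'. P \<subseteq> {3..} \<Longrightarrow> P' \<subseteq> {3..} \<Longrightarrow> P \<inter> {..<t} = P' \<inter> {..<t} \<Longrightarrow> Phi n K k t P \<Longrightarrow> Phi n K k t P'"
    using Phi_det assms by blast
  show "BB n K k t \<in> events" unfolding BB_def by (rule win(1)[OF assms(3) det])
  show "prob {\<omega> \<in> space M. Phi n K k t (cramer_set X \<omega>) \<and> X t \<omega> = False} = prob (BB n K k t) * (1 - 1 / ln (real t))"
    unfolding BB_def by (rule win(2)[OF assms(3) det])
qed

definition CC :: "nat \<Rightarrow> nat \<Rightarrow> nat \<Rightarrow> nat \<Rightarrow> 'a set" where
  "CC n K k t = {\<omega> \<in> space M. Phi n K k t (cramer_set X \<omega>) \<and> X t \<omega> = False}"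

lemma CC_ev:
  assumes "1 \<le> n" "2 \<le> k" "3 \<le> t"
  shows "CC n K k t \<in> events"
proof -
  have "CC n K k t = BB n K k t \<inter> {\<omega> \<in> space M. X t \<omega> = False}"
    unfolding CC_def BB_def by blast
  moreover have "BB n K k t \<inter> {\<omega> \<in> space M. X t \<omega> = False} \<in> events"
    by (rule sets.Int[OF BB_props(1)[OF assms] ev1[OF assms(3)]])
  ultimately show ?thesis by simp
qed

lemma AA_UN:
  assumes "1 \<le> n" "3 \<le> k" "odd k" "K \<le> k"
  shows "AA n K k = (\<Union>t\<in>{3..k^8}. CC n K k t)"
proof -
  have "Psi n K k (cramer_set X \<omega>) \<longleftrightarrow> (\<exists>t\<in>{3..k^8}. Phi n K k t (cramer_set X \<omega>) \<and> X t \<omega> = False)" for \<omega>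
  proof -
    have sub: "cramer_set X \<omega> \<subseteq> {3..}" by (auto simp: cramer_set_def)
    have "\<And>t. t \<in> {3..k^8} \<Longrightarrow> (t \<notin> cramer_set X \<omega>) = (X t \<omega> = False)"
      by (auto simp: cramer_set_def)
    then show ?thesis using Psi_iff[OF assms(1-4) sub] by auto
  qed
  then show ?thesis unfolding AA_def CC_def by blast
qed

lemma AA_ev:
  assumes "1 \<le> n" "3 \<le> k" "odd k" "K \<le> k"
  shows "AA n K k \<in> events"
  unfolding AA_UN[OF assms] using assms by (intro sets.finite_UN CC_ev) auto

lemma AA_rec:
  assumes n: "1 \<le> n" and k: "odd k" "K + 2 \<le> k" and K: "5 \<le> K"
  shows "prob (AA n K k) \<le> (1 - 1 / ln (real (k^8))) * prob (AA n K (k-2))"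
proof -
  let ?c = "1 / ln (real (k^8))"
  let ?T = "{3..k^8}"
  have k3: "3 \<le> k" "2 \<le> k" using k K by auto
  have lnk: "1 \<le> ln (real (k^8))"
  proof (rule ln_ge1)
    have "k^1 \<le> k^8" using k3 by (intro power_increasing) auto
    then have "3 \<le> k^8" using k3 by simp
    then show "3 \<le> real (k^8)" by linarith
  qed
  have c1: "0 \<le> 1 - ?c" using lnk by (simp add: divide_le_eq_1)
  have "prob (AA n K k) = prob (\<Union>t\<in>?T. CC n K k t)" using AA_UN[OF n k3(1) k(1)] k by simp
  also have "\<dots> \<le> (\<Sum>t\<in>?T. prob (CC n K k t))"
    by (rule finite_measure_subadditive_finite) (use CC_ev n k3 in auto)
  also have "\<dots> = (\<Sum>t\<in>?T. prob (BB n K k t) * (1 - 1 / ln (real t)))"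
    by (rule sum.cong[OF refl]) (use BB_props(2) n k3 in \<open>auto simp: CC_def\<close>)
  also have "\<dots> \<le> (\<Sum>t\<in>?T. prob (BB n K k t) * (1 - ?c))"
  proof (rule sum_mono)
    fix t assume t: "t \<in> ?T"
    have t3: "3 \<le> real t" using t by auto
    have "ln (real t) \<le> ln (real (k^8))" using t t3 k3 by (subst ln_le_cancel_iff) auto
    moreover have "0 < ln (real t)" using ln_ge1[OF t3] by simp
    ultimately have "?c \<le> 1 / ln (real t)" by (intro divide_left_mono) auto
    then show "prob (BB n K k t) * (1 - 1 / ln (real t)) \<le> prob (BB n K k t) * (1 - ?c)"
      by (intro mult_left_mono) auto
  qed
  also have "\<dots> = (1 - ?c) * (\<Sum>t\<in>?T. prob (BB n K k t))"
    by (simp add: sum_distrib_left mult.commute)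
  also have "(\<Sum>t\<in>?T. prob (BB n K k t)) = prob (\<Union>t\<in>?T. BB n K k t)"
  proof (rule finite_measure_finite_Union[symmetric])
    show "finite ?T" by simp
    show "BB n K k ` ?T \<subseteq> events" using BB_props(1) n k3 by auto
    show "disjoint_family_on (BB n K k) ?T"
      unfolding disjoint_family_on_def BB_def Phi_def by auto
  qed
  also have "prob (\<Union>t\<in>?T. BB n K k t) \<le> prob (AA n K (k-2))"
  proof (rule finite_measure_mono)
    show "AA n K (k-2) \<in> events" using AA_ev[OF n] k K by auto
    show "(\<Union>t\<in>?T. BB n K k t) \<subseteq> AA n K (k-2)"
      unfolding BB_def AA_def using Phi_Psi[OF k(1)] k K by auto
  qed
  finally show ?thesis using c1 by (simp add: mult_left_mono)
qed

end

lemma ln_ge1': "3 \<le> x \<Longrightarrow> 1 \<le> ln (x::real)"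
proof -
  assume x: "3 \<le> x"
  have "exp 1 \<le> x" using exp_le x by linarith
  then have "ln (exp 1) \<le> ln x" using x by (subst ln_le_cancel_iff) auto
  then show ?thesis by simp
qed

lemma lnk8: "3 \<le> k \<Longrightarrow> 1 \<le> ln (real (k^8))"
proof -
  assume k: "3 \<le> k"
  have "k^1 \<le> k^8" using k by (intro power_increasing) auto
  then have "3 \<le> k^8" using k by simp
  then show ?thesis by (intro ln_ge1') linarith
qed

lemma c_lower:
  assumes "3 \<le> k"
  shows "1 / (16 * sqrt (real k)) \<le> 1 / ln (real (k^8))"
proof -
  have x: "3 \<le> real k" using assms by simp
  have l8: "ln (real (k^8)) = 8 * ln (real k)" using x by (simp add: ln_realpow)
  have "ln (sqrt (real k)) \<le> sqrt (real k) - 1" using x by (intro ln_le_minus_one) auto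
  then have "ln (real k) \<le> 2 * sqrt (real k)" using x by (simp add: ln_sqrt)
  then have a: "ln (real (k^8)) \<le> 16 * sqrt (real k)" using l8 by simp
  have b: "0 < ln (real (k^8))" using lnk8[OF assms] by simp
  have c: "0 < sqrt (real k)" using x by simp
  show ?thesis using a b c by (intro divide_left_mono) (auto intro: mult_pos_pos)
qed

lemma prod_exp_bound:
  fixes c :: "'a \<Rightarrow> real"
  assumes fin: "finite A" and "\<And>r. r \<in> A \<Longrightarrow> 0 \<le> c r \<and> c r \<le> 1"
  shows "(\<Prod>r\<in>A. 1 - c r) \<le> exp (- (\<Sum>r\<in>A. c r))"
proof -
  have "(\<Prod>r\<in>A. 1 - c r) \<le> (\<Prod>r\<in>A. exp (- c r))"
  proof (rule prod_mono[of A "\<lambda>r. 1 - c r" "\<lambda>r. exp (- c r)"])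
    fix r assume "r \<in> A"
    then show "0 \<le> 1 - c r \<and> 1 - c r \<le> exp (- c r)"
      using assms(2)[of r] exp_ge_add_one_self[of "- c r"] by auto
  qed
  also have "\<dots> = exp (- (\<Sum>r\<in>A. c r))"
    using exp_sum[OF fin, of "\<lambda>r. - c r"] by (simp add: sum_negf)
  finally show ?thesis .
qed

lemma sum_c_lower:
  assumes K: "3 \<le> K" and s: "K \<le> s"
  shows "sqrt (real s) / 32 \<le> (\<Sum>r\<in>{1..s}. 1 / ln (real ((K + 2*r)^8)))"
proof -
  have s1: "1 \<le> s" using K s by simp
  have trm: "1 / (32 * sqrt (real s)) \<le> 1 / ln (real ((K + 2*r)^8))" if r: "r \<in> {1..s}" for r
  proof -
    have "real (K + 2*r) \<le> 4 * real s" using r s by auto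
    then have "sqrt (real (K + 2*r)) \<le> sqrt (4 * real s)" by (rule real_sqrt_le_mono)
    also have "\<dots> = 2 * sqrt (real s)" by (simp add: real_sqrt_mult)
    finally have "16 * sqrt (real (K + 2*r)) \<le> 32 * sqrt (real s)" by simp
    moreover have "0 < 16 * sqrt (real (K + 2*r))" using K by simp
    moreover have "0 < sqrt (real s)" using s1 by simp
    ultimately have "1 / (32 * sqrt (real s)) \<le> 1 / (16 * sqrt (real (K + 2*r)))"
      by (intro divide_left_mono) (auto intro: mult_pos_pos)
    also have "\<dots> \<le> 1 / ln (real ((K + 2*r)^8))" using c_lower[of "K + 2*r"] K by simp
    finally show ?thesis .
  qed
  have "real (card {1..s}) * (1 / (32 * sqrt (real s))) \<le> (\<Sum>r\<in>{1..s}. 1 / ln (real ((K + 2*r)^8)))"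
    by (rule sum_bounded_below) (rule trm)
  moreover have "real (card {1..s}) * (1 / (32 * sqrt (real s))) = sqrt (real s) / 32"
  proof -
    have "real s = sqrt (real s) * sqrt (real s)" by simp
    moreover have "0 < sqrt (real s)" using s1 by simp
    ultimately show ?thesis by (simp add: field_simps)
  qed
  ultimately show ?thesis by simp
qed

lemma sum_c_unbounded:
  assumes K: "3 \<le> K"
  shows "\<exists>s. y \<le> (\<Sum>r\<in>{1..s}. 1 / ln (real ((K + 2*r)^8)))"
proof -
  define s where "s = K + nat \<lceil>(32*y)^2\<rceil>"
  have "(32*y)^2 \<le> real s" unfolding s_def by linarith
  then have "sqrt ((32*y)^2) \<le> sqrt (real s)" by (rule real_sqrt_le_mono)
  then have "32 * y \<le> sqrt (real s)" by (metis abs_ge_self order_trans real_sqrt_abs)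
  then have "y \<le> sqrt (real s) / 32" by simp
  also have "\<dots> \<le> (\<Sum>r\<in>{1..s}. 1 / ln (real ((K + 2*r)^8)))"
    by (rule sum_c_lower[OF K]) (simp add: s_def)
  finally show ?thesis by blast
qed

lemma poly_ineq:
  fixes x :: real
  assumes "0 \<le> x"
  shows "x^2 * (x+1)^3 / 3 \<le> (x+1)^6 - x^6"
proof -
  have "(x+1)^6 - x^6 - x^2 * (x+1)^3 / 3 = (17*x^5 + 42*x^4 + 57*x^3 + 44*x^2 + 18*x + 3) / 3"
    by (simp add: algebra_simps eval_nat_numeral)
  moreover have "0 \<le> (17*x^5 + 42*x^4 + 57*x^3 + 44*x^2 + 18*x + 3) / 3"
    using assms by (intro divide_nonneg_pos add_nonneg_nonneg mult_nonneg_nonneg zero_le_power) auto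
  ultimately show ?thesis by linarith
qed

lemma exp_neg_le_inv: "0 < x \<Longrightarrow> exp (- x) \<le> 1 / (x::real)"
proof -
  assume x: "0 < x"
  have "x \<le> exp x" using exp_ge_add_one_self[of x] by linarith
  then have "1 / exp x \<le> 1 / x" using x by (intro divide_left_mono) auto
  then show ?thesis by (simp add: exp_minus field_simps)
qed

lemma blk_bound:
  assumes i: "2 \<le> i"
  shows "(\<Prod>m\<in>{i^6..<(i+1)^6}. 1 - 1 / ln (real m)) \<le> 6 / real i ^ 2"
proof -
  define B where "B = {i^6..<(i+1)^6}"
  define a where "a = 1 / (2 * (real i + 1)^3)"
  have apos: "0 < a" unfolding a_def by simp
  have i6: "3 \<le> i^6"
  proof -
    have "(2::nat)^6 \<le> i^6" using i by (intro power_mono) auto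
    then show ?thesis by simp
  qed
  have mB: "3 \<le> real m" "1 / ln (real m) \<le> 1" "a \<le> 1 / ln (real m)" "0 \<le> 1 / ln (real m)" if m: "m \<in> B" for m
  proof -
    show m3: "3 \<le> real m" using m i6 unfolding B_def by auto
    have l1: "1 \<le> ln (real m)" by (rule ln_ge1'[OF m3])
    then show "1 / ln (real m) \<le> 1" by simp
    show "0 \<le> 1 / ln (real m)" using l1 by simp
    have "ln (sqrt (real m)) \<le> sqrt (real m) - 1" using m3 by (intro ln_le_minus_one) auto
    then have l2: "ln (real m) \<le> 2 * sqrt (real m)" using m3 by (simp add: ln_sqrt)
    have "m < (i+1)^6" using m unfolding B_def by auto
    then have "real m < real ((i+1)^6)" by (simp only: of_nat_less_iff)
    also have "\<dots> = ((real i + 1)^3)^2" by (simp add: power_mult[symmetric] add.commute)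
    finally have "sqrt (real m) < (real i + 1)^3"
      by (metis real_less_lsqrt real_sqrt_ge_zero order_le_less_trans zero_le_power linorder_not_le of_nat_0_le_iff add_nonneg_nonneg zero_le_one)
    then have "ln (real m) \<le> 2 * (real i + 1)^3" using l2 by linarith
    then show "a \<le> 1 / ln (real m)" unfolding a_def using l1 by (intro divide_left_mono) auto
  qed
  have cBa: "0 < real (card B) * a"
  proof -
    have "i^6 < (i+1)^6" by (intro power_strict_mono) auto
    then have "0 < card B" unfolding B_def by simp
    then show "0 < real (card B) * a" using apos by simp
  qed
  have "(\<Prod>m\<in>B. 1 - 1 / ln (real m)) \<le> exp (- (\<Sum>m\<in>B. 1 / ln (real m)))"
  proof (rule prod_exp_bound)
    show "finite B" by (simp add: B_def)
    fix m assume "m \<in> B"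
    then show "0 \<le> 1 / ln (real m) \<and> 1 / ln (real m) \<le> 1" using mB(2,4) by blast
  qed
  also have "\<dots> \<le> exp (- (real (card B) * a))"
  proof -
    have "real (card B) * a \<le> (\<Sum>m\<in>B. 1 / ln (real m))"
      by (rule sum_bounded_below) (rule mB(3))
    then show ?thesis by simp
  qed
  also have "\<dots> \<le> 1 / (real (card B) * a)"
    by (rule exp_neg_le_inv[OF cBa])
  also have "\<dots> \<le> 6 / real i ^ 2"
  proof -
    have cB: "real (card B) = (real i + 1)^6 - real i ^ 6"
    proof -
      have "i^6 \<le> (i+1)^6" by (intro power_mono) auto
      then have "real (card B) = real ((i+1)^6) - real (i^6)" unfolding B_def by (simp add: of_nat_diff)
      then show ?thesis by (simp add: add.commute)
    qed
    have "real i ^ 2 / 6 \<le> real (card B) * a"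
    proof -
      have "real i ^ 2 * (real i + 1)^3 / 3 \<le> (real i + 1)^6 - real i ^ 6" by (rule poly_ineq) simp
      then have "real i ^ 2 * (real i + 1)^3 / 3 \<le> real (card B)" using cB by simp
      then have "real i ^ 2 * (real i + 1)^3 / 3 * a \<le> real (card B) * a" using apos by (intro mult_right_mono) auto
      moreover have "real i ^ 2 * (real i + 1)^3 / 3 * a = real i ^ 2 / 6" unfolding a_def by (simp add: field_simps)
      ultimately show ?thesis by linarith
    qed
    moreover have "0 < real i ^ 2 / 6" using i by simp
    ultimately have "1 / (real (card B) * a) \<le> 1 / (real i ^ 2 / 6)" using cBa by (intro divide_left_mono) (auto intro: mult_pos_pos)
    then show ?thesis by simp
  qed
  finally show ?thesis unfolding B_def .
qed

lemma block_card:
  fixes P :: "nat set"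
  assumes blk: "\<forall>i\<ge>J. \<exists>m. i^6 \<le> m \<and> m < (i+1)^6 \<and> m \<in> P"
  shows "N \<le> card (P \<inter> {..<(J+N)^6})"
proof -
  define f where "f i = (SOME m. (J+i)^6 \<le> m \<and> m < (J+i+1)^6 \<and> m \<in> P)" for i
  have f: "(J+i)^6 \<le> f i \<and> f i < (J+i+1)^6 \<and> f i \<in> P" for i
  proof -
    have "\<exists>m. (J+i)^6 \<le> m \<and> m < (J+i+1)^6 \<and> m \<in> P" using blk by auto
    then show ?thesis unfolding f_def by (rule someI_ex)
  qed
  show ?thesis
  proof (rule card_from_mono[where f=f])
    fix i j assume "i < j" "j < N"
    have "f i < (J+i+1)^6" using f by blast
    also have "\<dots> \<le> (J+j)^6" using \<open>i < j\<close> by (intro power_mono) auto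
    also have "\<dots> \<le> f j" using f by blast
    finally show "f i < f j" .
  next
    show "f ` {..<N} \<subseteq> P \<inter> {..<(J+N)^6}"
    proof
      fix y assume "y \<in> f ` {..<N}"
      then obtain i where i: "i < N" "y = f i" by auto
      have "f i < (J+i+1)^6" using f by blast
      also have "\<dots> \<le> (J+N)^6" using i by (intro power_mono) auto
      finally show "y \<in> P \<inter> {..<(J+N)^6}" using f i by auto
    qed
  qed simp
qed

lemma T_bound:
  fixes P :: "nat set"
  assumes blk: "\<forall>i\<ge>J. \<exists>m. i^6 \<le> m \<and> m < (i+1)^6 \<and> m \<in> P"
    and n: "1 \<le> n" and j: "n + J \<le> j" "64 \<le> j"
  shows "cramer_T P j n \<le> j^8"
proof -
  have q: "cramer_q P (n+i) \<le> (2 * j)^6" if i: "i < j" for i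
  proof -
    have c: "n + i \<le> card (P \<inter> {..<(J+(n+i))^6})" by (rule block_card[OF blk])
    have "enumerate P (n - 1 + i) < (J+(n+i))^6" using enum_props(2)[OF c] n by simp
    moreover have "(J+(n+i))^6 \<le> (2 * j)^6" using i j by (intro power_mono) auto
    ultimately show ?thesis using q_eq[OF n] by simp
  qed
  have "cramer_T P j n \<le> j * (2 * j)^6"
    using sum_bounded_above[of "{..<j}" "\<lambda>i. cramer_q P (n+i)" "(2 * j)^6"] q
    unfolding cramer_T_def by simp
  also have "\<dots> = 64 * j^7"
  proof -
    have "j^7 = j * j^6" using power_Suc[of j 6] by simp
    then show ?thesis by (simp add: power_mult_distrib)
  qed
  also have "\<dots> \<le> j * j^7" using j by (intro mult_right_mono) auto
  also have "\<dots> = j^8" using power_Suc[of j 7] by simp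
  finally show ?thesis .
qed

context cramer
begin

lemma AA_iter:
  assumes n: "1 \<le> n" and K: "odd K" "5 \<le> K"
  shows "prob (AA n K (K + 2 * s)) \<le> (\<Prod>r\<in>{1..s}. 1 - 1 / ln (real ((K + 2 * r)^8)))"
proof (induction s)
  case 0
  show ?case by simp
next
  case (Suc s)
  let ?c = "1 / ln (real ((K + 2 * Suc s)^8))"
  have c0: "0 \<le> 1 - ?c" using lnk8[of "K + 2 * Suc s"] K by simp
  have "prob (AA n K (K + 2 * Suc s)) \<le> (1 - ?c) * prob (AA n K (K + 2 * Suc s - 2))"
    by (rule AA_rec[OF n _ _ K(2)]) (use K in auto)
  also have "K + 2 * Suc s - 2 = K + 2 * s" by simp
  also have "(1 - ?c) * prob (AA n K (K + 2 * s)) \<le> (1 - ?c) * (\<Prod>r\<in>{1..s}. 1 - 1 / ln (real ((K + 2 * r)^8)))"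
    by (rule mult_left_mono[OF Suc.IH c0])
  also have "\<dots> = (\<Prod>r\<in>{1..Suc s}. 1 - 1 / ln (real ((K + 2 * r)^8)))"
  proof -
    have eq: "{1..Suc s} = insert (Suc s) {1..s}" by auto
    show ?thesis unfolding eq by (subst prod.insert) auto
  qed
  finally show ?case .
qed

definition ZZ :: "nat \<Rightarrow> nat \<Rightarrow> 'a set" where
  "ZZ n K = (\<Inter>s. AA n K (K + 2 * s))"

lemma ZZ_null:
  assumes n: "1 \<le> n" and K: "odd K" "5 \<le> K"
  shows "ZZ n K \<in> null_sets M"
proof -
  have ev: "ZZ n K \<in> events"
    unfolding ZZ_def by (rule sets.countable_INT) (use AA_ev[OF n] K in auto)
  have le: "measure M (ZZ n K) \<le> exp (- y)" for y
  proof -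
    obtain s where s: "y \<le> (\<Sum>r\<in>{1..s}. 1 / ln (real ((K + 2 * r)^8)))"
      using sum_c_unbounded[of K y] K by auto
    have "measure M (ZZ n K) \<le> prob (AA n K (K + 2 * s))"
      by (rule finite_measure_mono) (use AA_ev[OF n] K in \<open>auto simp: ZZ_def\<close>)
    also have "\<dots> \<le> (\<Prod>r\<in>{1..s}. 1 - 1 / ln (real ((K + 2 * r)^8)))"
      by (rule AA_iter[OF n K])
    also have "\<dots> \<le> exp (- (\<Sum>r\<in>{1..s}. 1 / ln (real ((K + 2 * r)^8))))"
    proof (rule prod_exp_bound)
      fix r assume "r \<in> {1..s}"
      have "1 \<le> ln (real ((K + 2 * r)^8))" using lnk8[of "K + 2 * r"] K by simp
      then show "0 \<le> 1 / ln (real ((K + 2 * r)^8)) \<and> 1 / ln (real ((K + 2 * r)^8)) \<le> 1" by simp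
    qed simp
    also have "\<dots> \<le> exp (- y)" using s by simp
    finally show ?thesis .
  qed
  have z: "measure M (ZZ n K) = 0"
  proof (rule ccontr)
    assume "measure M (ZZ n K) \<noteq> 0"
    then have pos: "0 < measure M (ZZ n K)" using measure_nonneg[of M "ZZ n K"] by linarith
    have "measure M (ZZ n K) \<le> exp (- ln (2 / measure M (ZZ n K)))" by (rule le)
    also have "\<dots> = measure M (ZZ n K) / 2" using pos by (simp add: exp_minus)
    finally show False using pos by simp
  qed
  show ?thesis using ev z by (simp add: emeasure_eq_measure null_sets_def)
qed

definition EE :: "nat \<Rightarrow> 'a set" where
  "EE i = {\<omega> \<in> space M. \<forall>m\<in>{max 3 (i^6)..<(i+1)^6}. X m \<omega> = False}"

lemma EE_ev: "EE i \<in> events"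
  unfolding EE_def by (rule evJ) auto

lemma EE_prob:
  assumes i: "2 \<le> i"
  shows "prob (EE i) \<le> 6 / real i ^ 2"
proof -
  have i6: "3 \<le> i^6"
  proof -
    have "(2::nat)^6 \<le> i^6" using i by (intro power_mono) auto
    then show ?thesis by simp
  qed
  then have mx: "max 3 (i^6) = i^6" by simp
  have "prob (EE i) = (\<Prod>m\<in>{i^6..<(i+1)^6}. prob {\<omega> \<in> space M. X m \<omega> = False})"
    unfolding EE_def mx by (rule probJ) (use i6 in auto)
  also have "\<dots> = (\<Prod>m\<in>{i^6..<(i+1)^6}. 1 - 1 / ln (real m))"
    by (rule prod.cong[OF refl]) (use i6 prob_not in auto)
  also have "\<dots> \<le> 6 / real i ^ 2" by (rule blk_bound[OF i])
  finally show ?thesis .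
qed

lemma EE_summable: "summable (\<lambda>i. prob (EE i))"
proof (rule summable_comparison_test'[where N=2])
  show "summable (\<lambda>i. 6 * inverse (real i ^ 2))"
    by (intro summable_mult inverse_power_summable) simp
  fix i :: nat assume "2 \<le> i"
  then show "norm (prob (EE i)) \<le> 6 * inverse (real i ^ 2)"
    using EE_prob[of i] by (simp add: field_simps)
qed

lemma not_EE:
  assumes "\<omega> \<in> space M" "\<omega> \<notin> EE i" "2 \<le> i"
  shows "\<exists>m. i^6 \<le> m \<and> m < (i+1)^6 \<and> m \<in> cramer_set X \<omega>"
proof -
  have i6: "3 \<le> i^6"
  proof -
    have "(2::nat)^6 \<le> i^6" using assms(3) by (intro power_mono) auto
    then show ?thesis by simp
  qed
  obtain m where m: "m \<in> {max 3 (i^6)..<(i+1)^6}" "X m \<omega>"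
    using assms(1,2) unfolding EE_def by auto
  have "i^6 \<le> m \<and> m < (i+1)^6 \<and> m \<in> cramer_set X \<omega>"
    using m i6 by (auto simp: cramer_set_def)
  then show ?thesis by blast
qed

lemma AE_blocks:
  "AE \<omega> in M. \<exists>J. \<forall>i\<ge>J. \<exists>m. i^6 \<le> m \<and> m < (i+1)^6 \<and> m \<in> cramer_set X \<omega>"
proof -
  have "AE \<omega> in M. eventually (\<lambda>i. \<omega> \<in> space M - EE i) sequentially"
    by (rule borel_cantelli_AE1) (use EE_ev EE_summable in \<open>auto simp: less_top[symmetric]\<close>)
  then show ?thesis
  proof (rule eventually_mono)
    fix \<omega> assume "eventually (\<lambda>i. \<omega> \<in> space M - EE i) sequentially"
    then obtain J0 where J0: "\<And>i. J0 \<le> i \<Longrightarrow> \<omega> \<in> space M - EE i"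
      unfolding eventually_sequentially by blast
    show "\<exists>J. \<forall>i\<ge>J. \<exists>m. i^6 \<le> m \<and> m < (i+1)^6 \<and> m \<in> cramer_set X \<omega>"
    proof (rule exI[of _ "max J0 2"], intro allI impI)
      fix i :: nat assume i: "max J0 2 \<le> i"
      then have "\<omega> \<in> space M" "\<omega> \<notin> EE i" using J0[of i] by auto
      then show "\<exists>m. i^6 \<le> m \<and> m < (i+1)^6 \<and> m \<in> cramer_set X \<omega>"
        using not_EE i by simp
    qed
  qed
qed

end

lemma le_pow6: "(i::nat) \<le> i^6"
proof (cases "i = 0")
  case True then show ?thesis by simp
next
  case False
  then have "i^1 \<le> i^6" by (intro power_increasing) auto
  then show ?thesis by simp
qed

theorem mainTheorem2:
  fixes M :: "'a measure" and X :: "nat \<Rightarrow> 'a \<Rightarrow> bool"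
  assumes "prob_space M"
    and "prob_space.indep_vars M (\<lambda>_. count_space UNIV) X {3..}"
    and "\<And>m. 3 \<le> m \<Longrightarrow> prob_space.prob M {\<omega> \<in> space M. X m \<omega>} = 1 / ln (real m)"
  shows "AE \<omega> in M. infinite (cramer_set X \<omega>) \<and>
           (\<forall>n\<ge>1. \<exists>k. odd k \<and> 3 \<le> k \<and> cramer_T (cramer_set X \<omega>) k n \<in> cramer_set X \<omega>)"
proof -
  interpret cramer M X
    using assms by (simp add: cramer_def cramer_axioms_def)
  define KK where "KK n J = 2 * (n + J + 64) + 1" for n J :: nat
  have A1: "AE \<omega> in M. \<exists>J. \<forall>i\<ge>J. \<exists>m. i^6 \<le> m \<and> m < (i+1)^6 \<and> m \<in> cramer_set X \<omega>"
    by (rule AE_blocks)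
  have A2n: "AE \<omega> in M. 1 \<le> n \<longrightarrow> \<omega> \<notin> ZZ n (KK n J)" for n J
  proof (cases "1 \<le> n")
    case True
    have "ZZ n (KK n J) \<in> null_sets M" by (rule ZZ_null[OF True]) (auto simp: KK_def)
    then show ?thesis by (rule AE_I') auto
  next
    case False then show ?thesis by simp
  qed
  have A2: "AE \<omega> in M. \<forall>n J. 1 \<le> n \<longrightarrow> \<omega> \<notin> ZZ n (KK n J)"
    using A2n by (simp add: AE_all_countable)
  have A3: "AE \<omega> in M. \<omega> \<in> space M" by (rule AE_space)
  have "AE \<omega> in M. \<omega> \<in> space M \<and> (\<exists>J. \<forall>i\<ge>J. \<exists>m. i^6 \<le> m \<and> m < (i+1)^6 \<and> m \<in> cramer_set X \<omega>)
      \<and> (\<forall>n J. 1 \<le> n \<longrightarrow> \<omega> \<notin> ZZ n (KK n J))"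
    using A1 A2 A3 by (intro AE_conjI) auto
  then show ?thesis
  proof (rule eventually_mono)
    fix \<omega> assume H: "\<omega> \<in> space M \<and> (\<exists>J. \<forall>i\<ge>J. \<exists>m. i^6 \<le> m \<and> m < (i+1)^6 \<and> m \<in> cramer_set X \<omega>)
      \<and> (\<forall>n J. 1 \<le> n \<longrightarrow> \<omega> \<notin> ZZ n (KK n J))"
    define P where "P = cramer_set X \<omega>"
    from H obtain J where blk: "\<forall>i\<ge>J. \<exists>m. i^6 \<le> m \<and> m < (i+1)^6 \<and> m \<in> P"
      unfolding P_def by blast
    have sp: "\<omega> \<in> space M" using H by blast
    have inf: "infinite P"
      unfolding infinite_nat_iff_unbounded_le
    proof
      fix b
      have "\<exists>m. (max J b)^6 \<le> m \<and> m < (max J b + 1)^6 \<and> m \<in> P" using blk by simp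
      then obtain m where m: "(max J b)^6 \<le> m" "m \<in> P" by blast
      have "b \<le> (max J b)^6" using le_pow6[of "max J b"] by linarith
      then have "b \<le> m" using m(1) by (rule le_trans)
      then show "\<exists>m'\<ge>b. m' \<in> P" using m(2) by blast
    qed
    have main: "\<exists>k. odd k \<and> 3 \<le> k \<and> cramer_T P k n \<in> P" if n: "1 \<le> n" for n
    proof (rule ccontr)
      assume nk: "\<not> (\<exists>k. odd k \<and> 3 \<le> k \<and> cramer_T P k n \<in> P)"
      let ?K = "KK n J"
      have "\<omega> \<in> ZZ n ?K"
        unfolding ZZ_def
      proof
        fix s
        show "\<omega> \<in> AA n ?K (?K + 2 * s)"
          unfolding AA_def Psi_def mem_Collect_eq P_def[symmetric]
        proof (intro conjI allI impI sp)
          show "okc (n + (?K + 2 * s) - 1) P"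
            unfolding okc_def using block_card[OF blk] by blast
          fix j assume "odd j \<and> 3 \<le> j \<and> j \<le> ?K + 2 * s"
          then show "cramer_T P j n \<notin> P" using nk by blast
        next
          fix j assume j: "odd j \<and> ?K \<le> j \<and> j \<le> ?K + 2 * s"
          show "cramer_T P j n \<le> j^8"
            by (rule T_bound[OF blk n]) (use j in \<open>auto simp: KK_def\<close>)
        qed
      qed
      then show False using H n by blast
    qed
    show "infinite (cramer_set X \<omega>) \<and>
           (\<forall>n\<ge>1. \<exists>k. odd k \<and> 3 \<le> k \<and> cramer_T (cramer_set X \<omega>) k n \<in> cramer_set X \<omega>)"
      using inf main unfolding P_def by blast
  qed
qed

end
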